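(* Let $G=(N,A)$ be an $s$-$t$ DAG and let $X$ be a sequence of nodes of $G$. The following statements are equivalent: (1) $X$ is safe for path covers of $G$. (2) There is a node $u\in N$ such that every $s$-$t$ path of $G$ containing $u$ contains $X$ (as a subsequence). (3) There is a node $v\in N$ such that $X$ is contained in the sequence obtained as the concatenation of the sequence of $s$-$v$ cutnodes with the sequence of $v$-$t$ cutnodes.
   Context: An $s$-$t$ DAG is a directed acyclic graph with a unique source $s$ and a unique sink $t$ such that every node is reachable from $s$ and every node reaches $t$. A sequence of nodes $X=u_1,\dots,u_\ell$ is a list of nodes such that there is a $u_i$-$u_{i+1}$ path for all $1\le i\le \ell-1$ (in particular a path is a sequence). $X$ is contained in (is a subsequence of) a sequence $Y$ if every node of $X$ occurs in $Y$. A path cover of $G$ is a set $P$ of $s$-$t$ paths such that every node of $G$ lies on some path of $P$. A sequence $X$ is safe (for path covers) if for every path cover $P$ of $G$, $X$ is a subsequence of some path of $P$; by convention, if no $s$-$t$ path contains $X$, then $X$ is unsafe. A node $w$ is a $u$-$v$ cutnode if every $u$-$v$ path contains $w$ (in particular $u$ and $v$ are $u$-$v$ cutnodes); the $u$-$v$ cutnodes appear in the same order on every $u$-$v$ path, giving the sequence of $u$-$v$ cutnodes. The concatenation of a sequence ending in $v$ with a sequence starting at $v$ lists the first sequence followed by the second with the repeated occurrence of $v$ removed. *)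

theory Defs
  imports Main
begin

definition st_dag :: "'a set \<Rightarrow> ('a \<times> 'a) set \<Rightarrow> 'a \<Rightarrow> 'a \<Rightarrow> bool" where
  "st_dag N A s t \<longleftrightarrow> finite N \<and> A \<subseteq> N \<times> N \<and> acyclic A \<and> s \<in> N \<and> t \<in> N
     \<and> (\<forall>v\<in>N. (v, s) \<notin> A) \<and> (\<forall>v\<in>N. (t, v) \<notin> A)
     \<and> (\<forall>v\<in>N. (s, v) \<in> A\<^sup>*) \<and> (\<forall>v\<in>N. (v, t) \<in> A\<^sup>*)"

definition is_path :: "'a set \<Rightarrow> ('a \<times> 'a) set \<Rightarrow> 'a list \<Rightarrow> bool" where
  "is_path N A p \<longleftrightarrow> p \<noteq> [] \<and> set p \<subseteq> N \<and> successively (\<lambda>x y. (x, y) \<in> A) p"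

definition uv_path :: "'a set \<Rightarrow> ('a \<times> 'a) set \<Rightarrow> 'a \<Rightarrow> 'a \<Rightarrow> 'a list \<Rightarrow> bool" where
  "uv_path N A u v p \<longleftrightarrow> is_path N A p \<and> hd p = u \<and> last p = v"

definition is_sequence :: "'a set \<Rightarrow> ('a \<times> 'a) set \<Rightarrow> 'a list \<Rightarrow> bool" where
  "is_sequence N A X \<longleftrightarrow> set X \<subseteq> N \<and>
     successively (\<lambda>x y. \<exists>p. uv_path N A x y p) X"

text \<open>X is contained in Y if every node of X occurs in Y (paper's definition).\<close>
definition contained :: "'a list \<Rightarrow> 'a list \<Rightarrow> bool" where
  "contained X Y \<longleftrightarrow> set X \<subseteq> set Y"

definition path_cover :: "'a set \<Rightarrow> ('a \<times> 'a) set \<Rightarrow> 'a \<Rightarrow> 'a \<Rightarrow> 'a list set \<Rightarrow> bool" where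
  "path_cover N A s t P \<longleftrightarrow> (\<forall>p\<in>P. uv_path N A s t p) \<and> (\<forall>w\<in>N. \<exists>p\<in>P. w \<in> set p)"

definition safe :: "'a set \<Rightarrow> ('a \<times> 'a) set \<Rightarrow> 'a \<Rightarrow> 'a \<Rightarrow> 'a list \<Rightarrow> bool" where
  "safe N A s t X \<longleftrightarrow> (\<exists>p. uv_path N A s t p \<and> contained X p) \<and>
     (\<forall>P. path_cover N A s t P \<longrightarrow> (\<exists>p\<in>P. contained X p))"

definition cutnode :: "'a set \<Rightarrow> ('a \<times> 'a) set \<Rightarrow> 'a \<Rightarrow> 'a \<Rightarrow> 'a \<Rightarrow> bool" where
  "cutnode N A u v w \<longleftrightarrow> (\<forall>p. uv_path N A u v p \<longrightarrow> w \<in> set p)"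

text \<open>The sequence of u-v cutnodes: the cutnodes in the order in which they appear
  on (any, hence a chosen) u-v path.\<close>
definition cut_seq :: "'a set \<Rightarrow> ('a \<times> 'a) set \<Rightarrow> 'a \<Rightarrow> 'a \<Rightarrow> 'a list" where
  "cut_seq N A u v = filter (cutnode N A u v) (SOME p. uv_path N A u v p)"

text \<open>Concatenation of a sequence ending in v with one starting in v (v not repeated).\<close>
definition seq_concat :: "'a list \<Rightarrow> 'a list \<Rightarrow> 'a list" where
  "seq_concat X Y = X @ tl Y"

end

theory Submission
  imports Defs
begin

lemma reach_path:
  assumes "(u, v) \<in> A\<^sup>*" "u \<in> N" "A \<subseteq> N \<times> N"
  shows "\<exists>p. uv_path N A u v p"
  using assms(1)
proof (induction rule: rtrancl_induct)
  case base
  then show ?case using assms(2) by (intro exI[of _ "[u]"]) (auto simp: uv_path_def is_path_def)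
next
  case (step y z)
  then obtain p where p: "uv_path N A u y p" by blast
  have "uv_path N A u z (p @ [z])"
    using p step(2) assms(3)
    by (auto simp: uv_path_def is_path_def successively_append_iff)
  then show ?case by blast
qed

lemma in_tl: "x \<in> set (tl xs) \<Longrightarrow> x \<in> set xs"
  by (cases xs) auto

lemma path_cons: "uv_path N A u v q \<Longrightarrow> \<exists>r. q = u # r"
  unfolding uv_path_def is_path_def by (cases q) auto

lemma path_concat:
  assumes "uv_path N A u v p" "uv_path N A v w q"
  shows "uv_path N A u w (p @ tl q)"
proof -
  obtain q' where q: "q = v # q'" using assms(2) unfolding uv_path_def is_path_def
    by (cases q) auto
  show ?thesis
  proof (cases q')
    case Nil
    then show ?thesis using assms q by (auto simp: uv_path_def)
  next
    case (Cons a r)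
    then show ?thesis using assms q
      by (auto simp: uv_path_def is_path_def successively_append_iff)
  qed
qed

lemma path_split:
  assumes "uv_path N A s t p" "u \<in> set p"
  shows "\<exists>a b. uv_path N A s u (a @ [u]) \<and> uv_path N A u t (u # b) \<and> p = a @ u # b"
proof -
  obtain a b where p: "p = a @ u # b" using split_list[OF assms(2)] by blast
  have sp: "successively (\<lambda>x y. (x, y) \<in> A) p" "set p \<subseteq> N" "hd p = s" "last p = t"
    using assms unfolding uv_path_def is_path_def by auto
  have "successively (\<lambda>x y. (x, y) \<in> A) ((a @ [u]) @ b)" using sp p by simp
  then have s1: "successively (\<lambda>x y. (x, y) \<in> A) (a @ [u])"
    by (simp only: successively_append_iff)
  have "successively (\<lambda>x y. (x, y) \<in> A) (a @ (u # b))" using sp p by simp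
  then have s2: "successively (\<lambda>x y. (x, y) \<in> A) (u # b)"
    by (simp only: successively_append_iff)
  have "uv_path N A s u (a @ [u])" using s1 sp p
    by (cases a) (auto simp: uv_path_def is_path_def)
  moreover have "uv_path N A u t (u # b)" using s2 sp p
    by (cases b) (auto simp: uv_path_def is_path_def)
  ultimately show ?thesis using p by blast
qed

lemma st_path_through:
  assumes "st_dag N A s t" "u \<in> N"
  shows "\<exists>p. uv_path N A s t p \<and> u \<in> set p"
proof -
  have N: "A \<subseteq> N \<times> N" "s \<in> N" "(s,u) \<in> A\<^sup>*" "(u,t) \<in> A\<^sup>*"
    using assms unfolding st_dag_def by auto
  obtain p where p: "uv_path N A s u p" using reach_path N assms(2) by metis
  obtain q where q: "uv_path N A u t q" using reach_path N assms(2) by metis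
  have "uv_path N A s t (p @ tl q)" using path_concat[OF p q] .
  moreover have "u \<in> set p" using p unfolding uv_path_def is_path_def by auto
  ultimately show ?thesis by auto
qed

lemma path_ends: "uv_path N A u v p \<Longrightarrow> u \<in> set p \<and> v \<in> set p"
  unfolding uv_path_def is_path_def by auto

lemma cutnode_in_seq:
  assumes "\<exists>p. uv_path N A u v p" "cutnode N A u v w"
  shows "w \<in> set (cut_seq N A u v)"
proof -
  have "uv_path N A u v (SOME p. uv_path N A u v p)" using assms(1) by (rule someI_ex)
  then show ?thesis using assms(2) unfolding cut_seq_def cutnode_def by auto
qed

lemma seq_cutnode: "w \<in> set (cut_seq N A u v) \<Longrightarrow> cutnode N A u v w"
  unfolding cut_seq_def by auto

lemma key:
  assumes "st_dag N A s t" "v \<in> N"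
  shows "(\<forall>p. uv_path N A s t p \<and> v \<in> set p \<longrightarrow> contained X p) \<longleftrightarrow>
         contained X (seq_concat (cut_seq N A s v) (cut_seq N A v t))"
proof -
  have N: "A \<subseteq> N \<times> N" "s \<in> N" "(s,v) \<in> A\<^sup>*" "(v,t) \<in> A\<^sup>*"
    using assms unfolding st_dag_def by auto
  obtain p0 where p0: "uv_path N A s v p0" using reach_path N assms(2) by metis
  obtain q0 where q0: "uv_path N A v t q0" using reach_path N assms(2) by metis
  have setc: "set (seq_concat (cut_seq N A s v) (cut_seq N A v t))
      = {w. cutnode N A s v w} \<union> {w. cutnode N A v t w}"
  proof
    show "set (seq_concat (cut_seq N A s v) (cut_seq N A v t))
      \<subseteq> {w. cutnode N A s v w} \<union> {w. cutnode N A v t w}"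
      unfolding seq_concat_def using seq_cutnode[of _ N A s v] seq_cutnode[of _ N A v t] in_tl by fastforce
  next
    have vc: "cutnode N A s v v" unfolding cutnode_def using path_ends by metis
    show "{w. cutnode N A s v w} \<union> {w. cutnode N A v t w}
      \<subseteq> set (seq_concat (cut_seq N A s v) (cut_seq N A v t))"
    proof
      fix w assume w: "w \<in> {w. cutnode N A s v w} \<union> {w. cutnode N A v t w}"
      show "w \<in> set (seq_concat (cut_seq N A s v) (cut_seq N A v t))"
      proof (cases "cutnode N A s v w \<or> w = v")
        case True
        then have "cutnode N A s v w" using vc by blast
        moreover have "\<exists>p. uv_path N A s v p" using p0 by blast
        ultimately have "w \<in> set (cut_seq N A s v)" by (rule cutnode_in_seq[rotated])
        then show ?thesis unfolding seq_concat_def by simp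
      next
        case False
        then have wc: "cutnode N A v t w" "w \<noteq> v" using w by auto
        let ?q = "SOME p. uv_path N A v t p"
        have qq: "uv_path N A v t ?q" using q0 by (rule someI)
        then obtain r where r: "?q = v # r" using path_cons[OF qq] by blast
        have "w \<in> set ?q" using wc(1) qq unfolding cutnode_def by blast
        then have wr: "w \<in> set r" using wc(2) r by simp
        have vt: "cutnode N A v t v" unfolding cutnode_def using path_ends by metis
        have "cut_seq N A v t = v # filter (cutnode N A v t) r"
          unfolding cut_seq_def r using vt by simp
        then have "w \<in> set (tl (cut_seq N A v t))" using wr wc(1) by simp
        then show ?thesis unfolding seq_concat_def by auto
      qed
    qed
  qed
  show ?thesis
  proof
    assume H: "\<forall>p. uv_path N A s t p \<and> v \<in> set p \<longrightarrow> contained X p"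
    show "contained X (seq_concat (cut_seq N A s v) (cut_seq N A v t))"
      unfolding contained_def setc
    proof
      fix x assume x: "x \<in> set X"
      show "x \<in> {w. cutnode N A s v w} \<union> {w. cutnode N A v t w}"
      proof (rule ccontr)
        assume "x \<notin> {w. cutnode N A s v w} \<union> {w. cutnode N A v t w}"
        then obtain p q where p: "uv_path N A s v p" "x \<notin> set p"
          and q: "uv_path N A v t q" "x \<notin> set q"
          unfolding cutnode_def by auto
        have pq: "uv_path N A s t (p @ tl q)" using path_concat[OF p(1) q(1)] .
        have "v \<in> set (p @ tl q)" using path_ends[OF p(1)] by simp
        then have "contained X (p @ tl q)" using H pq by blast
        then have "x \<in> set (p @ tl q)" using x unfolding contained_def by auto
        then show False using p q by (auto dest: in_tl)
      qed
    qed
  next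
    assume C: "contained X (seq_concat (cut_seq N A s v) (cut_seq N A v t))"
    show "\<forall>p. uv_path N A s t p \<and> v \<in> set p \<longrightarrow> contained X p"
    proof (intro allI impI)
      fix p assume p: "uv_path N A s t p \<and> v \<in> set p"
      then obtain a b where ab: "uv_path N A s v (a @ [v])" "uv_path N A v t (v # b)"
        "p = a @ v # b" using path_split by metis
      show "contained X p" unfolding contained_def
      proof
        fix x assume "x \<in> set X"
        then have "cutnode N A s v x \<or> cutnode N A v t x" using C setc
          unfolding contained_def by auto
        then show "x \<in> set p" using ab unfolding cutnode_def by fastforce
      qed
    qed
  qed
qed

theorem theorem1:
  assumes "st_dag N A s t"
    and "is_sequence N A X"
  shows "(safe N A s t X \<longleftrightarrow>
           (\<exists>u\<in>N. \<forall>p. uv_path N A s t p \<and> u \<in> set p \<longrightarrow> contained X p))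
       \<and> (safe N A s t X \<longleftrightarrow>
           (\<exists>v\<in>N. contained X (seq_concat (cut_seq N A s v) (cut_seq N A v t))))"
proof -
  have eq1: "safe N A s t X \<longleftrightarrow>
           (\<exists>u\<in>N. \<forall>p. uv_path N A s t p \<and> u \<in> set p \<longrightarrow> contained X p)"
  proof
    assume S: "safe N A s t X"
    show "\<exists>u\<in>N. \<forall>p. uv_path N A s t p \<and> u \<in> set p \<longrightarrow> contained X p"
    proof (rule ccontr)
      assume "\<not> ?thesis"
      then have "\<forall>u\<in>N. \<exists>p. uv_path N A s t p \<and> u \<in> set p \<and> \<not> contained X p" by blast
      then obtain f where f0: "\<forall>u\<in>N. uv_path N A s t (f u) \<and> u \<in> set (f u) \<and> \<not> contained X (f u)"
        by (metis bchoice)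
      then have f: "\<And>u. u \<in> N \<Longrightarrow> uv_path N A s t (f u) \<and> u \<in> set (f u) \<and> \<not> contained X (f u)"
        by blast
      have "path_cover N A s t (f ` N)" unfolding path_cover_def using f by blast
      then obtain p where "p \<in> f ` N" "contained X p" using S unfolding safe_def by blast
      then show False using f by blast
    qed
  next
    assume "\<exists>u\<in>N. \<forall>p. uv_path N A s t p \<and> u \<in> set p \<longrightarrow> contained X p"
    then obtain u where u: "u \<in> N" "\<forall>p. uv_path N A s t p \<and> u \<in> set p \<longrightarrow> contained X p" by blast
    obtain p where "uv_path N A s t p" "u \<in> set p" using st_path_through[OF assms(1) u(1)] by blast
    then have ex: "\<exists>p. uv_path N A s t p \<and> contained X p" using u by blast
    have "\<forall>P. path_cover N A s t P \<longrightarrow> (\<exists>p\<in>P. contained X p)"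
    proof (intro allI impI)
      fix P assume "path_cover N A s t P"
      then obtain p where "p \<in> P" "u \<in> set p" "uv_path N A s t p"
        unfolding path_cover_def using u(1) by blast
      then show "\<exists>p\<in>P. contained X p" using u(2) by blast
    qed
    then show "safe N A s t X" using ex unfolding safe_def by blast
  qed
  moreover have "(\<exists>u\<in>N. \<forall>p. uv_path N A s t p \<and> u \<in> set p \<longrightarrow> contained X p) \<longleftrightarrow>
      (\<exists>v\<in>N. contained X (seq_concat (cut_seq N A s v) (cut_seq N A v t)))"
    using key[OF assms(1)] by blast
  ultimately show ?thesis by blast
qed

end
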